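(* Let $W$ be the Witt algebra with basis $\{x_n\mid n\in\mathbb{Z}\}$ and bracket $[x_m,x_n]=(n-m)x_{m+n}$, and let $V$ be a left-symmetric algebra structure on the underlying space of $W$ with product $x_mx_n=f(m,n)x_{m+n}$ for some $f:\mathbb{Z}\times\mathbb{Z}\to\mathbb{C}$ and with $x_mx_n-x_nx_m=(n-m)x_{m+n}$. Regard $V$ as a $W$-module via left multiplication, $x_m\cdot v=x_mv$. Then $V$ is not isomorphic as a $W$-module to $A'_{0,1}$, the $W$-module with basis $\{v_n\mid n\in\mathbb{Z}\setminus\{0\}\}$ and action $x_iv_n=(n+i)v_{n+i}$ (where $v_0:=0$).
   Context: A left-symmetric algebra is a vector space with bilinear product satisfying $(xy)z-x(yz)=(yx)z-y(xz)$; left multiplication then gives a representation of the commutator Lie algebra. *)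

theory Defs
  imports Complex_Main
begin

text \<open>Vectors in a complex vector space with basis indexed by the integers are
  represented by their coefficient functions, which are finitely supported.\<close>

definition fin_supp :: "(int \<Rightarrow> complex) \<Rightarrow> bool" where
  "fin_supp g \<longleftrightarrow> finite {n. g n \<noteq> 0}"

definition V_space :: "(int \<Rightarrow> complex) set" where
  "V_space = {g. fin_supp g}"

text \<open>Left-symmetry identity (xy)z - x(yz) = (yx)z - y(xz) on basis elements,
  and the commutator condition x_m x_n - x_n x_m = (n-m) x_(m+n).\<close>
definition left_symmetric_coeffs :: "(int \<times> int \<Rightarrow> complex) \<Rightarrow> bool" where
  "left_symmetric_coeffs f \<longleftrightarrow>
     (\<forall>m n k. f (m, n) * f (m + n, k) - f (n, k) * f (m, n + k)
            = f (n, m) * f (n + m, k) - f (m, k) * f (n, m + k))"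

definition witt_compatible :: "(int \<times> int \<Rightarrow> complex) \<Rightarrow> bool" where
  "witt_compatible f \<longleftrightarrow> (\<forall>m n. f (m, n) - f (n, m) = of_int (n - m))"

text \<open>W-action on V by left multiplication: x_m . v = x_m v.\<close>
definition V_act :: "(int \<times> int \<Rightarrow> complex) \<Rightarrow> int \<Rightarrow> (int \<Rightarrow> complex) \<Rightarrow> (int \<Rightarrow> complex)" where
  "V_act f m g = (\<lambda>k. f (m, k - m) * g (k - m))"

text \<open>The module A'_{0,1}: basis v_n, n \<noteq> 0, with x_i v_n = (n+i) v_(n+i), v_0 = 0.\<close>
definition A01_space :: "(int \<Rightarrow> complex) set" where
  "A01_space = {g. fin_supp g \<and> g 0 = 0}"

definition A01_act :: "int \<Rightarrow> (int \<Rightarrow> complex) \<Rightarrow> (int \<Rightarrow> complex)" where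
  "A01_act i g = (\<lambda>k. of_int k * g (k - i))"

definition W_module_iso ::
  "(int \<Rightarrow> complex) set \<Rightarrow> (int \<Rightarrow> (int \<Rightarrow> complex) \<Rightarrow> (int \<Rightarrow> complex)) \<Rightarrow>
   (int \<Rightarrow> complex) set \<Rightarrow> (int \<Rightarrow> (int \<Rightarrow> complex) \<Rightarrow> (int \<Rightarrow> complex)) \<Rightarrow>
   ((int \<Rightarrow> complex) \<Rightarrow> (int \<Rightarrow> complex)) \<Rightarrow> bool" where
  "W_module_iso M actM N actN \<phi> \<longleftrightarrow>
     bij_betw \<phi> M N \<and>
     (\<forall>u\<in>M. \<forall>v\<in>M. \<phi> (\<lambda>k. u k + v k) = (\<lambda>k. \<phi> u k + \<phi> v k)) \<and>
     (\<forall>c. \<forall>u\<in>M. \<phi> (\<lambda>k. c * u k) = (\<lambda>k. c * \<phi> u k)) \<and>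
     (\<forall>m. \<forall>u\<in>M. \<phi> (actM m u) = actN m (\<phi> u))"

end

theory Submission
  imports Defs
begin

lemma finV: "finite {n. g n \<noteq> 0} \<Longrightarrow> g \<in> V_space"
  by (simp add: V_space_def fin_supp_def)

theorem theorem3p5:
  fixes f :: "int \<times> int \<Rightarrow> complex"
  assumes "left_symmetric_coeffs f"
    and "witt_compatible f"
  shows "\<not> (\<exists>\<phi>. W_module_iso V_space (V_act f) A01_space A01_act \<phi>)"
proof
  assume "\<exists>\<phi>. W_module_iso V_space (V_act f) A01_space A01_act \<phi>"
  then obtain \<phi> where iso: "W_module_iso V_space (V_act f) A01_space A01_act \<phi>" by blast
  have inj: "inj_on \<phi> V_space" and surj: "\<phi> ` V_space = A01_space"
    using iso unfolding W_module_iso_def bij_betw_def by auto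
  have smul: "\<And>c u. u \<in> V_space \<Longrightarrow> \<phi> (\<lambda>k. c * u k) = (\<lambda>k. c * \<phi> u k)"
    using iso unfolding W_module_iso_def by auto
  have act: "\<And>m u. u \<in> V_space \<Longrightarrow> \<phi> (V_act f m u) = A01_act m (\<phi> u)"
    using iso unfolding W_module_iso_def by auto
  define e where "e n = (\<lambda>k::int. if k = n then (1::complex) else 0)" for n
  have eV: "e n \<in> V_space" for n
    by (rule finV, rule finite_subset[of _ "{n}"]) (auto simp: e_def)
  have zV: "(\<lambda>k::int. 0::complex) \<in> V_space" by (rule finV) simp
  have z: "\<phi> (\<lambda>k. 0) = (\<lambda>k. 0)"
    using smul[OF eV, of 0 0] by simp
  have unz: "\<phi> (e n) \<noteq> (\<lambda>k. 0)" for n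
  proof
    assume "\<phi> (e n) = (\<lambda>k. 0)"
    then have "e n = (\<lambda>k. 0)" using inj_onD[OF inj _ eV zV] z by simp
    then show False by (metis e_def zero_neq_one)
  qed
  have eig: "of_int k * \<phi> (e n) k = f(0,n) * \<phi> (e n) k" for n k
  proof -
    have "V_act f 0 (e n) = (\<lambda>k. f(0,n) * e n k)"
      by (auto simp: V_act_def e_def)
    then have "\<phi> (V_act f 0 (e n)) = (\<lambda>k. f(0,n) * \<phi> (e n) k)"
      using smul[OF eV] by simp
    moreover have "\<phi> (V_act f 0 (e n)) = (\<lambda>k. of_int k * \<phi> (e n) k)"
      using act[OF eV] by (simp add: A01_act_def)
    ultimately show ?thesis by metis
  qed
  have supp: "\<phi> (e n) k = 0" if "f(0,n) = of_int j" "k \<noteq> j" for n k j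
  proof -
    have "(of_int k - of_int j) * \<phi> (e n) k = 0"
      using eig[of k n] that(1) by (simp add: algebra_simps)
    moreover have "(of_int k - of_int j :: complex) \<noteq> 0" using that(2) by simp
    ultimately show ?thesis by simp
  qed
  have u00: "\<phi> (e 0) 0 = 0"
    using surj eV unfolding A01_space_def by auto
  obtain a where a: "\<phi> (e 0) a \<noteq> 0" using unz[of 0] by auto
  have fa: "f(0,0) = of_int a" using eig[of a 0] a by simp
  have anz: "a \<noteq> 0" using a u00 by auto
  have s0: "\<phi> (e 0) k = 0" if "k \<noteq> a" for k using supp[OF fa that] .
  have w1V: "V_act f (-a) (e 0) \<in> V_space"
    by (rule finV, rule finite_subset[of _ "{-a}"]) (auto simp: e_def V_act_def)
  have "\<phi> (V_act f (-a) (e 0)) = (\<lambda>k. 0)"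
  proof -
    have "(\<lambda>k. of_int k * \<phi> (e 0) (k + a)) = (\<lambda>k. 0)"
    proof
      fix k show "of_int k * \<phi> (e 0) (k + a) = 0"
        by (cases "k = 0") (auto simp: s0)
    qed
    then show ?thesis using act[OF eV, of "-a" 0] by (simp add: A01_act_def)
  qed
  then have "V_act f (-a) (e 0) = (\<lambda>k. 0)" using inj_onD[OF inj _ w1V zV] z by simp
  then have "V_act f (-a) (e 0) (-a) = 0" by simp
  then have fma: "f(-a,0) = 0" by (simp add: V_act_def e_def)
  have "f(0,-a) - f(-a,0) = of_int (-a - 0)"
    using assms(2) unfolding witt_compatible_def by blast
  then have f0ma: "f(0,-a) = of_int (-a)" using fma by simp
  have sa: "\<phi> (e (-a)) k = 0" if "k \<noteq> -a" for k using supp[OF f0ma that] .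
  define s where "s = \<phi> (e (-a)) (-a)"
  have snz: "s \<noteq> 0"
  proof
    assume "s = 0"
    then have "\<phi> (e (-a)) = (\<lambda>k. 0)"
    proof (intro ext)
      fix k show "\<phi> (e (-a)) k = 0" using sa[of k] \<open>s = 0\<close> unfolding s_def by (cases "k = -a") simp_all
    qed
    then show False using unz by blast
  qed
  define c where "c = - of_int a * \<phi> (e 0) a / s"
  have cnz: "c \<noteq> 0" using a anz snz by (simp add: c_def)
  have w2V: "V_act f (-2*a) (e 0) \<in> V_space"
    by (rule finV, rule finite_subset[of _ "{-2*a}"]) (auto simp: e_def V_act_def)
  have w3V: "(\<lambda>k. c * e (-a) k) \<in> V_space"
    by (rule finV, rule finite_subset[of _ "{-a}"]) (auto simp: e_def)
  have L: "\<phi> (V_act f (-2*a) (e 0)) = (\<lambda>k. of_int k * \<phi> (e 0) (k + 2*a))"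
    using act[OF eV, of "-2*a" 0] by (simp add: A01_act_def)
  have R: "\<phi> (\<lambda>k. c * e (-a) k) = (\<lambda>k. c * \<phi> (e (-a)) k)"
    using smul[OF eV] by simp
  have "(\<lambda>k. of_int k * \<phi> (e 0) (k + 2*a)) = (\<lambda>k. c * \<phi> (e (-a)) k)"
  proof
    fix k
    show "of_int k * \<phi> (e 0) (k + 2*a) = c * \<phi> (e (-a)) k"
    proof (cases "k = -a")
      case True
      then show ?thesis using snz by (simp add: c_def s_def[symmetric])
    next
      case False
      then show ?thesis proof -
        have "k + 2*a \<noteq> a" using False by simp
        then show ?thesis using s0[of "k+2*a"] sa[OF False] by simp
      qed
    qed
  qed
  then have "V_act f (-2*a) (e 0) = (\<lambda>k. c * e (-a) k)"
    using inj_onD[OF inj _ w2V w3V] L R by simp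
  then have "V_act f (-2*a) (e 0) (-a) = c * e (-a) (-a)" by (rule fun_cong)
  then show False using anz cnz by (simp add: V_act_def e_def)
qed

end
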